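(* Let $G$ and $H$ be graphs each having at least one edge. Then the join of $G$ and $H$ is well-bicovered if and only if each of $G$ and $H$ is both well-covered and well-bicovered, and $b(G)=b(H)=2\alpha(G)=2\alpha(H)$.
   Context: All graphs are finite and simple; "subgraph" means induced subgraph. $b(G)$ denotes the maximum order of an induced bipartite subgraph of $G$. A graph is well-bicovered if every vertex-inclusion-maximal induced bipartite subgraph has the same order (namely $b(G)$). A graph is well-covered if every maximal independent set has the same cardinality, namely the independence number $\alpha(G)$. The join of $G$ and $H$ is the disjoint union of $G$ and $H$ together with all edges between $V(G)$ and $V(H)$. *)

theory Defs
  imports Main
begin

definition graph :: "'a set \<Rightarrow> ('a \<Rightarrow> 'a \<Rightarrow> bool) \<Rightarrow> bool" where
  "graph V E \<longleftrightarrow> finite V \<and> (\<forall>x y. E x y \<longrightarrow> x \<in> V \<and> y \<in> V)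
     \<and> (\<forall>x y. E x y \<longrightarrow> E y x) \<and> (\<forall>x. \<not> E x x)"

definition has_edge :: "('a \<Rightarrow> 'a \<Rightarrow> bool) \<Rightarrow> bool" where
  "has_edge E \<longleftrightarrow> (\<exists>x y. E x y)"

definition independent :: "'a set \<Rightarrow> ('a \<Rightarrow> 'a \<Rightarrow> bool) \<Rightarrow> 'a set \<Rightarrow> bool" where
  "independent V E S \<longleftrightarrow> S \<subseteq> V \<and> (\<forall>x\<in>S. \<forall>y\<in>S. \<not> E x y)"

definition bipartite_set :: "'a set \<Rightarrow> ('a \<Rightarrow> 'a \<Rightarrow> bool) \<Rightarrow> 'a set \<Rightarrow> bool" where
  "bipartite_set V E S \<longleftrightarrow> S \<subseteq> V \<and>
     (\<exists>A B. A \<union> B = S \<and> A \<inter> B = {} \<and> independent V E A \<and> independent V E B)"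

definition maximal_independent :: "'a set \<Rightarrow> ('a \<Rightarrow> 'a \<Rightarrow> bool) \<Rightarrow> 'a set \<Rightarrow> bool" where
  "maximal_independent V E S \<longleftrightarrow> independent V E S \<and>
     (\<forall>T. independent V E T \<and> S \<subseteq> T \<longrightarrow> T = S)"

definition maximal_bipartite_set :: "'a set \<Rightarrow> ('a \<Rightarrow> 'a \<Rightarrow> bool) \<Rightarrow> 'a set \<Rightarrow> bool" where
  "maximal_bipartite_set V E S \<longleftrightarrow> bipartite_set V E S \<and>
     (\<forall>T. bipartite_set V E T \<and> S \<subseteq> T \<longrightarrow> T = S)"

definition alpha :: "'a set \<Rightarrow> ('a \<Rightarrow> 'a \<Rightarrow> bool) \<Rightarrow> nat" where
  "alpha V E = Max (card ` {S. independent V E S})"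

definition bnum :: "'a set \<Rightarrow> ('a \<Rightarrow> 'a \<Rightarrow> bool) \<Rightarrow> nat" where
  "bnum V E = Max (card ` {S. bipartite_set V E S})"

definition well_covered :: "'a set \<Rightarrow> ('a \<Rightarrow> 'a \<Rightarrow> bool) \<Rightarrow> bool" where
  "well_covered V E \<longleftrightarrow> (\<forall>S. maximal_independent V E S \<longrightarrow> card S = alpha V E)"

definition well_bicovered :: "'a set \<Rightarrow> ('a \<Rightarrow> 'a \<Rightarrow> bool) \<Rightarrow> bool" where
  "well_bicovered V E \<longleftrightarrow> (\<forall>S. maximal_bipartite_set V E S \<longrightarrow> card S = bnum V E)"

definition join_V :: "'a set \<Rightarrow> 'b set \<Rightarrow> ('a + 'b) set" where
  "join_V V1 V2 = V1 <+> V2"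

definition join_E :: "'a set \<Rightarrow> ('a \<Rightarrow> 'a \<Rightarrow> bool) \<Rightarrow> 'b set \<Rightarrow> ('b \<Rightarrow> 'b \<Rightarrow> bool)
    \<Rightarrow> ('a + 'b) \<Rightarrow> ('a + 'b) \<Rightarrow> bool" where
  "join_E V1 E1 V2 E2 u v =
     (case (u, v) of
        (Inl x, Inl y) \<Rightarrow> E1 x y
      | (Inr x, Inr y) \<Rightarrow> E2 x y
      | (Inl x, Inr y) \<Rightarrow> x \<in> V1 \<and> y \<in> V2
      | (Inr x, Inl y) \<Rightarrow> y \<in> V1 \<and> x \<in> V2)"

end

theory Submission imports Defs begin

lemma bip_mono: "bipartite_set V E S \<Longrightarrow> T \<subseteq> S \<Longrightarrow> bipartite_set V E T"
  unfolding bipartite_set_def independent_def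
  apply clarify
  subgoal for A B by (intro conjI exI[of _ "A \<inter> T"] exI[of _ "B \<inter> T"]) auto
  done

lemma bip_empty: "bipartite_set V E {}"
  unfolding bipartite_set_def independent_def by auto

lemma indep_empty: "independent V E {}"
  unfolding independent_def by auto

lemma bip_sub: "bipartite_set V E S \<Longrightarrow> S \<subseteq> V"
  unfolding bipartite_set_def by auto

lemma bip_finite: "graph V E \<Longrightarrow> bipartite_set V E S \<Longrightarrow> finite S"
  unfolding bipartite_set_def graph_def using finite_subset by blast

lemma indep_finite: "graph V E \<Longrightarrow> independent V E S \<Longrightarrow> finite S"
  unfolding independent_def graph_def using finite_subset by blast

lemma bnum_ge: assumes "graph V E" "bipartite_set V E S" shows "card S \<le> bnum V E"
proof -
  have "finite {S. bipartite_set V E S}" using assms(1) unfolding graph_def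
    by (rule_tac finite_subset[of _ "Pow V"]) (auto simp: bipartite_set_def)
  then show ?thesis unfolding bnum_def using assms(2) by auto
qed

lemma alpha_ge: assumes "graph V E" "independent V E S" shows "card S \<le> alpha V E"
proof -
  have "finite {S. independent V E S}" using assms(1) unfolding graph_def
    by (rule_tac finite_subset[of _ "Pow V"]) (auto simp: independent_def)
  then show ?thesis unfolding alpha_def using assms(2) by auto
qed

lemma bnum_att: assumes "graph V E" shows "\<exists>S. maximal_bipartite_set V E S \<and> card S = bnum V E"
proof -
  have fin: "finite {S. bipartite_set V E S}" using assms(1) unfolding graph_def
    by (rule_tac finite_subset[of _ "Pow V"]) (auto simp: bipartite_set_def)
  have "bnum V E \<in> card ` {S. bipartite_set V E S}" unfolding bnum_def
    using fin bip_empty by (intro Max_in) auto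
  then obtain S where S: "bipartite_set V E S" "card S = bnum V E" by auto
  have "\<forall>T. bipartite_set V E T \<and> S \<subseteq> T \<longrightarrow> T = S"
  proof (intro allI impI)
    fix T assume T: "bipartite_set V E T \<and> S \<subseteq> T"
    then have "card T \<le> card S" using bnum_ge[OF assms] S by auto
    moreover have "finite T" using T bip_finite[OF assms] by auto
    ultimately show "T = S" using T by (metis card_seteq)
  qed
  then show ?thesis using S unfolding maximal_bipartite_set_def by auto
qed

lemma alpha_att: assumes "graph V E" shows "\<exists>S. maximal_independent V E S \<and> card S = alpha V E"
proof -
  have fin: "finite {S. independent V E S}" using assms(1) unfolding graph_def
    by (rule_tac finite_subset[of _ "Pow V"]) (auto simp: independent_def)
  have "alpha V E \<in> card ` {S. independent V E S}" unfolding alpha_def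
    using fin indep_empty by (intro Max_in) auto
  then obtain S where S: "independent V E S" "card S = alpha V E" by auto
  have "\<forall>T. independent V E T \<and> S \<subseteq> T \<longrightarrow> T = S"
  proof (intro allI impI)
    fix T assume T: "independent V E T \<and> S \<subseteq> T"
    then have "card T \<le> card S" using alpha_ge[OF assms] S by auto
    moreover have "finite T" using T indep_finite[OF assms] by auto
    ultimately show "T = S" using T by (metis card_seteq)
  qed
  then show ?thesis using S unfolding maximal_independent_def by auto
qed

lemma bnum_le: assumes "graph V E" shows "bnum V E \<le> 2 * alpha V E"
proof -
  obtain S where S: "maximal_bipartite_set V E S" "card S = bnum V E" using bnum_att[OF assms] by auto
  then obtain A B where AB: "A \<union> B = S" "A \<inter> B = {}" "independent V E A" "independent V E B"
    unfolding maximal_bipartite_set_def bipartite_set_def by auto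
  have "card S = card A + card B" using AB indep_finite[OF assms] by (metis card_Un_disjoint)
  also have "\<dots> \<le> 2 * alpha V E" using alpha_ge[OF assms] AB by (simp add: add_mono mult_2)
  finally show ?thesis using S by simp
qed

lemma wb_I: assumes "graph V E" "\<And>S. maximal_bipartite_set V E S \<Longrightarrow> card S = c"
  shows "well_bicovered V E \<and> bnum V E = c"
proof -
  obtain S where "maximal_bipartite_set V E S" "card S = bnum V E" using bnum_att[OF assms(1)] by blast
  then show ?thesis using assms(2) unfolding well_bicovered_def by auto
qed

lemma wc_I: assumes "graph V E" "\<And>S. maximal_independent V E S \<Longrightarrow> card S = c"
  shows "well_covered V E \<and> alpha V E = c"
proof -
  obtain S where "maximal_independent V E S" "card S = alpha V E" using alpha_att[OF assms(1)] by blast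
  then show ?thesis using assms(2) unfolding well_covered_def by auto
qed

lemma maxbip_props: assumes "graph V E" "has_edge E" "maximal_bipartite_set V E S"
  shows "\<not> independent V E S" "S \<noteq> {}"
proof -
  obtain x y where xy: "E x y" using assms(2) unfolding has_edge_def by auto
  have xV: "x \<in> V" "y \<in> V" using xy assms(1) unfolding graph_def by auto
  show "\<not> independent V E S"
  proof
    assume ind: "independent V E S"
    have "x \<in> S"
    proof (rule ccontr)
      assume "x \<notin> S"
      have "bipartite_set V E (S \<union> {x})" unfolding bipartite_set_def
        using ind xV assms(1) \<open>x \<notin> S\<close>
        by (intro conjI exI[of _ S] exI[of _ "{x}"]) (auto simp: independent_def graph_def)
      then show False using assms(3) \<open>x \<notin> S\<close> unfolding maximal_bipartite_set_def by auto
    qed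
    moreover have "y \<in> S"
    proof (rule ccontr)
      assume "y \<notin> S"
      have "bipartite_set V E (S \<union> {y})" unfolding bipartite_set_def
        using ind xV assms(1) \<open>y \<notin> S\<close>
        by (intro conjI exI[of _ S] exI[of _ "{y}"]) (auto simp: independent_def graph_def)
      then show False using assms(3) \<open>y \<notin> S\<close> unfolding maximal_bipartite_set_def by auto
    qed
    ultimately show False using ind xy unfolding independent_def by auto
  qed
  then show "S \<noteq> {}" using indep_empty by auto
qed

lemma maxind_ne: assumes "graph V E" "has_edge E" "maximal_independent V E S"
  shows "S \<noteq> {}"
proof
  assume "S = {}"
  obtain x y where xy: "E x y" using assms(2) unfolding has_edge_def by auto
  have "independent V E {x}" using xy assms(1) unfolding graph_def independent_def by auto
  then show False using assms(3) \<open>S = {}\<close> unfolding maximal_independent_def by auto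
qed


locale two =
  fixes V1 :: "'a set" and E1 :: "'a \<Rightarrow> 'a \<Rightarrow> bool"
    and V2 :: "'b set" and E2 :: "'b \<Rightarrow> 'b \<Rightarrow> bool"
  assumes g1: "graph V1 E1" and g2: "graph V2 E2"
    and h1: "has_edge E1" and h2: "has_edge E2"
begin

abbreviation "VJ \<equiv> join_V V1 V2"
abbreviation "EJ \<equiv> join_E V1 E1 V2 E2"

lemma EJ_simps[simp]:
  "EJ (Inl x) (Inl y) = E1 x y" "EJ (Inr u) (Inr v) = E2 u v"
  "EJ (Inl x) (Inr v) = (x \<in> V1 \<and> v \<in> V2)" "EJ (Inr v) (Inl x) = (x \<in> V1 \<and> v \<in> V2)"
  unfolding join_E_def by auto

lemma E1V: "E1 x y \<Longrightarrow> x \<in> V1 \<and> y \<in> V1" using g1 unfolding graph_def by auto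
lemma E2V: "E2 x y \<Longrightarrow> x \<in> V2 \<and> y \<in> V2" using g2 unfolding graph_def by auto

lemma VJ_mem[simp]: "Inl x \<in> VJ \<longleftrightarrow> x \<in> V1" "Inr y \<in> VJ \<longleftrightarrow> y \<in> V2"
  unfolding join_V_def by auto

lemma graphJ: "graph VJ EJ"
proof -
  have "finite VJ" using g1 g2 unfolding graph_def join_V_def Plus_def by auto
  moreover have "\<forall>x y. EJ x y \<longrightarrow> x \<in> VJ \<and> y \<in> VJ"
    apply (intro allI) subgoal for x y by (cases x; cases y) (auto dest: E1V E2V) done
  moreover have "\<forall>x y. EJ x y \<longrightarrow> EJ y x"
    apply (intro allI) subgoal for x y using g1 g2 unfolding graph_def by (cases x; cases y) auto done
  moreover have "\<forall>x. \<not> EJ x x"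
    apply (intro allI) subgoal for x using g1 g2 unfolding graph_def by (cases x) auto done
  ultimately show ?thesis unfolding graph_def by blast
qed

lemma decomp: "S = Inl ` (Inl -` S) \<union> Inr ` (Inr -` S)"
  apply (rule set_eqI) subgoal for z by (cases z) auto done

lemma subJ: "S \<subseteq> VJ \<Longrightarrow> Inl -` S \<subseteq> V1 \<and> Inr -` S \<subseteq> V2"
  by auto

lemma indepL: "independent VJ EJ S \<Longrightarrow> independent V1 E1 (Inl -` S)"
  unfolding independent_def by (auto, metis EJ_simps(1))
lemma indepR: "independent VJ EJ S \<Longrightarrow> independent V2 E2 (Inr -` S)"
  unfolding independent_def by (auto, metis EJ_simps(2))

lemma bipL: assumes "bipartite_set VJ EJ S" shows "bipartite_set V1 E1 (Inl -` S)"
proof -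
  obtain A B where AB: "A \<union> B = S" "A \<inter> B = {}" "independent VJ EJ A" "independent VJ EJ B"
    using assms unfolding bipartite_set_def by auto
  show ?thesis unfolding bipartite_set_def using assms bip_sub[OF assms]
    by (intro conjI exI[of _ "Inl -` A"] exI[of _ "Inl -` B"] indepL AB) (use AB in auto)
qed

lemma bipR: assumes "bipartite_set VJ EJ S" shows "bipartite_set V2 E2 (Inr -` S)"
proof -
  obtain A B where AB: "A \<union> B = S" "A \<inter> B = {}" "independent VJ EJ A" "independent VJ EJ B"
    using assms unfolding bipartite_set_def by auto
  show ?thesis unfolding bipartite_set_def using assms bip_sub[OF assms]
    by (intro conjI exI[of _ "Inr -` A"] exI[of _ "Inr -` B"] indepR AB) (use AB in auto)
qed

lemma indep_inl: "independent V1 E1 A \<Longrightarrow> independent VJ EJ (Inl ` A)"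
  unfolding independent_def by auto
lemma indep_inr: "independent V2 E2 A \<Longrightarrow> independent VJ EJ (Inr ` A)"
  unfolding independent_def by auto

lemma bip_inl: assumes "bipartite_set V1 E1 S" shows "bipartite_set VJ EJ (Inl ` S)"
proof -
  obtain A B where AB: "A \<union> B = S" "A \<inter> B = {}" "independent V1 E1 A" "independent V1 E1 B"
    using assms unfolding bipartite_set_def by auto
  show ?thesis unfolding bipartite_set_def using bip_sub[OF assms]
    by (intro conjI exI[of _ "Inl ` A"] exI[of _ "Inl ` B"] indep_inl AB) (use AB in auto)
qed

lemma bip_inr: assumes "bipartite_set V2 E2 S" shows "bipartite_set VJ EJ (Inr ` S)"
proof -
  obtain A B where AB: "A \<union> B = S" "A \<inter> B = {}" "independent V2 E2 A" "independent V2 E2 B"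
    using assms unfolding bipartite_set_def by auto
  show ?thesis unfolding bipartite_set_def using bip_sub[OF assms]
    by (intro conjI exI[of _ "Inr ` A"] exI[of _ "Inr ` B"] indep_inr AB) (use AB in auto)
qed

lemma bip_both: assumes "independent V1 E1 A" "independent V2 E2 B"
  shows "bipartite_set VJ EJ (Inl ` A \<union> Inr ` B)"
  unfolding bipartite_set_def using assms
  by (intro conjI exI[of _ "Inl ` A"] exI[of _ "Inr ` B"] indep_inl indep_inr)
     (auto simp: independent_def)

lemma triL: assumes "bipartite_set VJ EJ S" "Inr -` S \<noteq> {}"
  shows "independent V1 E1 (Inl -` S)"
proof -
  obtain A B where AB: "A \<union> B = S" "A \<inter> B = {}" "independent VJ EJ A" "independent VJ EJ B"
    using assms unfolding bipartite_set_def by auto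
  obtain z where z: "Inr z \<in> S" using assms(2) by auto
  have zV: "z \<in> V2" using bip_sub[OF assms(1)] z by auto
  have "\<not> E1 x y" if "Inl x \<in> S" "Inl y \<in> S" for x y
  proof
    assume e: "E1 x y"
    then have "x \<in> V1" "y \<in> V1" using E1V by auto
    then show False using AB z zV that e unfolding independent_def
      by (metis (no_types, lifting) EJ_simps(1,3,4) UnE)
  qed
  then show ?thesis unfolding independent_def using bip_sub[OF assms(1)] by auto
qed

lemma triR: assumes "bipartite_set VJ EJ S" "Inl -` S \<noteq> {}"
  shows "independent V2 E2 (Inr -` S)"
proof -
  obtain A B where AB: "A \<union> B = S" "A \<inter> B = {}" "independent VJ EJ A" "independent VJ EJ B"
    using assms unfolding bipartite_set_def by auto
  obtain z where z: "Inl z \<in> S" using assms(2) by auto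
  have zV: "z \<in> V1" using bip_sub[OF assms(1)] z by auto
  have "\<not> E2 x y" if "Inr x \<in> S" "Inr y \<in> S" for x y
  proof
    assume e: "E2 x y"
    then have "x \<in> V2" "y \<in> V2" using E2V by auto
    then show False using AB z zV that e unfolding independent_def
      by (metis (no_types, lifting) EJ_simps(2,3,4) UnE)
  qed
  then show ?thesis unfolding independent_def using bip_sub[OF assms(1)] by auto
qed

lemma cardJ: "finite A \<Longrightarrow> finite B \<Longrightarrow> card (Inl ` A \<union> Inr ` B) = card A + card B"
  by (subst card_Un_disjoint) (auto simp: card_image)

lemma maxL: assumes "maximal_bipartite_set V1 E1 A" shows "maximal_bipartite_set VJ EJ (Inl ` A)"
proof -
  have bA: "bipartite_set V1 E1 A" using assms unfolding maximal_bipartite_set_def by auto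
  have "T = Inl ` A" if T: "bipartite_set VJ EJ T" "Inl ` A \<subseteq> T" for T
  proof -
    have "A \<subseteq> Inl -` T" using T by auto
    then have TA: "Inl -` T = A" using bipL[OF T(1)] assms unfolding maximal_bipartite_set_def by auto
    have "Inr -` T = {}"
    proof (rule ccontr)
      assume "Inr -` T \<noteq> {}"
      then have "independent V1 E1 A" using triL[OF T(1)] TA by auto
      then show False using maxbip_props(1)[OF g1 h1 assms] by auto
    qed
    moreover have "T = Inl ` (Inl -` T) \<union> Inr ` (Inr -` T)" by (rule decomp)
    ultimately show ?thesis using TA by (metis Un_empty_right image_empty)
  qed
  then show ?thesis using bip_inl[OF bA] unfolding maximal_bipartite_set_def by blast
qed

lemma maxR: assumes "maximal_bipartite_set V2 E2 A" shows "maximal_bipartite_set VJ EJ (Inr ` A)"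
proof -
  have bA: "bipartite_set V2 E2 A" using assms unfolding maximal_bipartite_set_def by auto
  have "T = Inr ` A" if T: "bipartite_set VJ EJ T" "Inr ` A \<subseteq> T" for T
  proof -
    have "A \<subseteq> Inr -` T" using T by auto
    then have TA: "Inr -` T = A" using bipR[OF T(1)] assms unfolding maximal_bipartite_set_def by auto
    have "Inl -` T = {}"
    proof (rule ccontr)
      assume "Inl -` T \<noteq> {}"
      then have "independent V2 E2 A" using triR[OF T(1)] TA by auto
      then show False using maxbip_props(1)[OF g2 h2 assms] by auto
    qed
    moreover have "T = Inl ` (Inl -` T) \<union> Inr ` (Inr -` T)" by (rule decomp)
    ultimately show ?thesis using TA by (metis Un_empty_left image_empty)
  qed
  then show ?thesis using bip_inr[OF bA] unfolding maximal_bipartite_set_def by blast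
qed

lemma maxLR: assumes "maximal_independent V1 E1 A" "maximal_independent V2 E2 B"
  shows "maximal_bipartite_set VJ EJ (Inl ` A \<union> Inr ` B)"
proof -
  have iA: "independent V1 E1 A" and iB: "independent V2 E2 B"
    using assms unfolding maximal_independent_def by auto
  have neA: "A \<noteq> {}" using maxind_ne[OF g1 h1 assms(1)] .
  have neB: "B \<noteq> {}" using maxind_ne[OF g2 h2 assms(2)] .
  have "T = Inl ` A \<union> Inr ` B" if T: "bipartite_set VJ EJ T" "Inl ` A \<union> Inr ` B \<subseteq> T" for T
  proof -
    have s: "A \<subseteq> Inl -` T" "B \<subseteq> Inr -` T" using T by auto
    have n1: "Inl -` T \<noteq> {}" using neA s by blast
    have n2: "Inr -` T \<noteq> {}" using neB s by blast
    have i1: "independent V1 E1 (Inl -` T)" by (rule triL[OF T(1) n2])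
    have i2: "independent V2 E2 (Inr -` T)" by (rule triR[OF T(1) n1])
    have mA: "\<forall>T. independent V1 E1 T \<and> A \<subseteq> T \<longrightarrow> T = A" using assms(1) unfolding maximal_independent_def by blast
    have mB: "\<forall>T. independent V2 E2 T \<and> B \<subseteq> T \<longrightarrow> T = B" using assms(2) unfolding maximal_independent_def by blast
    have e1: "Inl -` T = A" using mA i1 s(1) by blast
    have e2: "Inr -` T = B" using mB i2 s(2) by blast
    have "T = Inl ` (Inl -` T) \<union> Inr ` (Inr -` T)" by (rule decomp)
    then show ?thesis unfolding e1 e2 .
  qed
  then show ?thesis using bip_both[OF iA iB] unfolding maximal_bipartite_set_def by blast
qed

lemma maxJ_cases: assumes "maximal_bipartite_set VJ EJ S"
  shows "(S = Inl ` (Inl -` S) \<and> maximal_bipartite_set V1 E1 (Inl -` S))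
       \<or> (S = Inr ` (Inr -` S) \<and> maximal_bipartite_set V2 E2 (Inr -` S))
       \<or> (S = Inl ` (Inl -` S) \<union> Inr ` (Inr -` S) \<and> maximal_independent V1 E1 (Inl -` S) \<and> maximal_independent V2 E2 (Inr -` S))"
proof -
  have bS: "bipartite_set VJ EJ S" using assms unfolding maximal_bipartite_set_def by blast
  have mx: "\<And>T. bipartite_set VJ EJ T \<Longrightarrow> S \<subseteq> T \<Longrightarrow> T = S"
    using assms unfolding maximal_bipartite_set_def by blast
  have dc: "S = Inl ` (Inl -` S) \<union> Inr ` (Inr -` S)" by (rule decomp)
  show ?thesis
  proof (cases "Inr -` S = {}")
    case True
    have sS: "S = Inl ` (Inl -` S)"
    proof (rule set_eqI)
      fix z show "z \<in> S \<longleftrightarrow> z \<in> Inl ` (Inl -` S)" using True by (cases z) auto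
    qed
    have "maximal_bipartite_set V1 E1 (Inl -` S)"
      unfolding maximal_bipartite_set_def
    proof (intro conjI allI impI bipL[OF bS])
      fix T assume T: "bipartite_set V1 E1 T \<and> Inl -` S \<subseteq> T"
      have "S \<subseteq> Inl ` T"
      proof
        fix z assume "z \<in> S" then show "z \<in> Inl ` T" using T True by (cases z) auto
      qed
      then have "Inl ` T = S" using mx[OF bip_inl] T by blast
      then have "Inl -` (Inl ` T :: ('a+'b) set) = Inl -` S" by (rule arg_cong)
      then show "T = Inl -` S" by auto
    qed
    then show ?thesis using sS by blast
  next
    case F2: False
    show ?thesis
    proof (cases "Inl -` S = {}")
      case True
      have sS: "S = Inr ` (Inr -` S)"
      proof (rule set_eqI)
        fix z show "z \<in> S \<longleftrightarrow> z \<in> Inr ` (Inr -` S)" using True by (cases z) auto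
      qed
      have "maximal_bipartite_set V2 E2 (Inr -` S)"
        unfolding maximal_bipartite_set_def
      proof (intro conjI allI impI bipR[OF bS])
        fix T assume T: "bipartite_set V2 E2 T \<and> Inr -` S \<subseteq> T"
        have "S \<subseteq> Inr ` T"
        proof
          fix z assume "z \<in> S" then show "z \<in> Inr ` T" using T True by (cases z) auto
        qed
        then have "Inr ` T = S" using mx[OF bip_inr] T by blast
        then have "Inr -` (Inr ` T :: ('a+'b) set) = Inr -` S" by (rule arg_cong)
        then show "T = Inr -` S" by auto
      qed
      then show ?thesis using sS by blast
    next
      case F1: False
      have i1: "independent V1 E1 (Inl -` S)" using triL[OF bS F2] .
      have i2: "independent V2 E2 (Inr -` S)" using triR[OF bS F1] .
      have "maximal_independent V1 E1 (Inl -` S)"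
        unfolding maximal_independent_def
      proof (intro conjI allI impI i1)
        fix T assume T: "independent V1 E1 T \<and> Inl -` S \<subseteq> T"
        have "S \<subseteq> Inl ` T \<union> Inr ` (Inr -` S)"
        proof
          fix z assume "z \<in> S" then show "z \<in> Inl ` T \<union> Inr ` (Inr -` S)" using T by (cases z) auto
        qed
        then have "Inl ` T \<union> Inr ` (Inr -` S) = S" using mx[OF bip_both[OF _ i2]] T by blast
        then have "Inl -` (Inl ` T \<union> Inr ` (Inr -` S)) = Inl -` S" by (rule arg_cong)
        then show "T = Inl -` S" by auto
      qed
      moreover have "maximal_independent V2 E2 (Inr -` S)"
        unfolding maximal_independent_def
      proof (intro conjI allI impI i2)
        fix T assume T: "independent V2 E2 T \<and> Inr -` S \<subseteq> T"
        have "S \<subseteq> Inl ` (Inl -` S) \<union> Inr ` T"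
        proof
          fix z assume "z \<in> S" then show "z \<in> Inl ` (Inl -` S) \<union> Inr ` T" using T by (cases z) auto
        qed
        then have "Inl ` (Inl -` S) \<union> Inr ` T = S" using mx[OF bip_both[OF i1]] T by blast
        then have "Inr -` (Inl ` (Inl -` S) \<union> Inr ` T) = Inr -` S" by (rule arg_cong)
        then show "T = Inr -` S" by auto
      qed
      ultimately show ?thesis using dc by blast
    qed
  qed
qed

lemma cardL: "finite A \<Longrightarrow> card (Inl ` A :: ('a+'b) set) = card A" by (simp add: card_image)
lemma cardR: "finite A \<Longrightarrow> card (Inr ` A :: ('a+'b) set) = card A" by (simp add: card_image)

lemma mb_fin1: "maximal_bipartite_set V1 E1 A \<Longrightarrow> finite A"
  using bip_finite[OF g1] unfolding maximal_bipartite_set_def by auto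
lemma mb_fin2: "maximal_bipartite_set V2 E2 A \<Longrightarrow> finite A"
  using bip_finite[OF g2] unfolding maximal_bipartite_set_def by auto
lemma mi_fin1: "maximal_independent V1 E1 A \<Longrightarrow> finite A"
  using indep_finite[OF g1] unfolding maximal_independent_def by auto
lemma mi_fin2: "maximal_independent V2 E2 A \<Longrightarrow> finite A"
  using indep_finite[OF g2] unfolding maximal_independent_def by auto

lemma main:
  shows "well_bicovered VJ EJ \<longleftrightarrow>
           (well_covered V1 E1 \<and> well_bicovered V1 E1 \<and>
            well_covered V2 E2 \<and> well_bicovered V2 E2 \<and>
            bnum V1 E1 = bnum V2 E2 \<and>
            bnum V2 E2 = 2 * alpha V1 E1 \<and>
            2 * alpha V1 E1 = 2 * alpha V2 E2)"
proof
  assume wb: "well_bicovered VJ EJ"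
  define c where "c = bnum VJ EJ"
  have cS: "\<And>S. maximal_bipartite_set VJ EJ S \<Longrightarrow> card S = c" using wb unfolding well_bicovered_def c_def by auto
  have G1: "well_bicovered V1 E1 \<and> bnum V1 E1 = c"
  proof (rule wb_I[OF g1])
    fix S assume S: "maximal_bipartite_set V1 E1 S"
    have "card (Inl ` S :: ('a+'b) set) = c" by (rule cS[OF maxL[OF S]])
    then show "card S = c" using cardL[OF mb_fin1[OF S]] by simp
  qed
  have G2: "well_bicovered V2 E2 \<and> bnum V2 E2 = c"
  proof (rule wb_I[OF g2])
    fix S assume S: "maximal_bipartite_set V2 E2 S"
    have "card (Inr ` S :: ('a+'b) set) = c" by (rule cS[OF maxR[OF S]])
    then show "card S = c" using cardR[OF mb_fin2[OF S]] by simp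
  qed
  obtain I0 where I0: "maximal_independent V1 E1 I0" "card I0 = alpha V1 E1" using alpha_att[OF g1] by auto
  obtain J0 where J0: "maximal_independent V2 E2 J0" "card J0 = alpha V2 E2" using alpha_att[OF g2] by auto
  have sum: "\<And>I J. maximal_independent V1 E1 I \<Longrightarrow> maximal_independent V2 E2 J \<Longrightarrow> card I + card J = c"
  proof -
    fix I J assume a: "maximal_independent V1 E1 I" "maximal_independent V2 E2 J"
    have "card (Inl ` I \<union> Inr ` J :: ('a+'b) set) = c" by (rule cS[OF maxLR[OF a]])
    then show "card I + card J = c" using cardJ[OF mi_fin1[OF a(1)] mi_fin2[OF a(2)]] by simp
  qed
  have A: "alpha V1 E1 + alpha V2 E2 = c" using sum[OF I0(1) J0(1)] I0 J0 by simp
  have W1: "well_covered V1 E1 \<and> alpha V1 E1 = c - alpha V2 E2"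
  proof (rule wc_I[OF g1])
    fix I assume I: "maximal_independent V1 E1 I"
    have "card I + alpha V2 E2 = c" using sum[OF I J0(1)] J0(2) by simp
    then show "card I = c - alpha V2 E2" by simp
  qed
  have W2: "well_covered V2 E2 \<and> alpha V2 E2 = c - alpha V1 E1"
  proof (rule wc_I[OF g2])
    fix I assume I: "maximal_independent V2 E2 I"
    have "alpha V1 E1 + card I = c" using sum[OF I0(1) I] I0(2) by simp
    then show "card I = c - alpha V1 E1" by simp
  qed
  have "c \<le> 2 * alpha V1 E1" using bnum_le[OF g1] G1 by simp
  moreover have "c \<le> 2 * alpha V2 E2" using bnum_le[OF g2] G2 by simp
  ultimately show "well_covered V1 E1 \<and> well_bicovered V1 E1 \<and>
            well_covered V2 E2 \<and> well_bicovered V2 E2 \<and>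
            bnum V1 E1 = bnum V2 E2 \<and>
            bnum V2 E2 = 2 * alpha V1 E1 \<and>
            2 * alpha V1 E1 = 2 * alpha V2 E2"
  proof -
    have "alpha V1 E1 = alpha V2 E2" using \<open>c \<le> 2 * alpha V1 E1\<close> \<open>c \<le> 2 * alpha V2 E2\<close> A by linarith
    then show ?thesis using G1 G2 W1[THEN conjunct1] W2[THEN conjunct1] A by simp
  qed
next
  assume H: "well_covered V1 E1 \<and> well_bicovered V1 E1 \<and>
            well_covered V2 E2 \<and> well_bicovered V2 E2 \<and>
            bnum V1 E1 = bnum V2 E2 \<and>
            bnum V2 E2 = 2 * alpha V1 E1 \<and>
            2 * alpha V1 E1 = 2 * alpha V2 E2"
  have "card S = bnum V1 E1" if S: "maximal_bipartite_set VJ EJ S" for S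
  proof -
    from maxJ_cases[OF S] show ?thesis
    proof (elim disjE conjE)
      assume a1: "S = Inl ` (Inl -` S)" and a2: "maximal_bipartite_set V1 E1 (Inl -` S)"
      have "card S = card (Inl ` (Inl -` S) :: ('a+'b) set)" using a1 by (rule arg_cong)
      also have "\<dots> = card (Inl -` S)" by (rule cardL[OF mb_fin1[OF a2]])
      also have "\<dots> = bnum V1 E1" using H a2 unfolding well_bicovered_def by blast
      finally show ?thesis .
    next
      assume a1: "S = Inr ` (Inr -` S)" and a2: "maximal_bipartite_set V2 E2 (Inr -` S)"
      have "card S = card (Inr ` (Inr -` S) :: ('a+'b) set)" using a1 by (rule arg_cong)
      also have "\<dots> = card (Inr -` S)" by (rule cardR[OF mb_fin2[OF a2]])
      also have "\<dots> = bnum V2 E2" using H a2 unfolding well_bicovered_def by blast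
      also have "\<dots> = bnum V1 E1" using H by simp
      finally show ?thesis .
    next
      assume a1: "S = Inl ` (Inl -` S) \<union> Inr ` (Inr -` S)" and a2: "maximal_independent V1 E1 (Inl -` S)"
        and a3: "maximal_independent V2 E2 (Inr -` S)"
      have "card S = card (Inl ` (Inl -` S) \<union> Inr ` (Inr -` S))" using a1 by (rule arg_cong)
      also have "\<dots> = card (Inl -` S) + card (Inr -` S)" by (rule cardJ[OF mi_fin1[OF a2] mi_fin2[OF a3]])
      also have "\<dots> = alpha V1 E1 + alpha V2 E2" using a2 a3 H unfolding well_covered_def by auto
      finally show ?thesis using H by linarith
    qed
  qed
  then show "well_bicovered VJ EJ" using wb_I[OF graphJ, of "bnum V1 E1"] by simp
qed

end

theorem mainTheorem2:
  fixes V1 :: "'a set" and E1 :: "'a \<Rightarrow> 'a \<Rightarrow> bool"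
    and V2 :: "'b set" and E2 :: "'b \<Rightarrow> 'b \<Rightarrow> bool"
  assumes "graph V1 E1" and "graph V2 E2"
    and "has_edge E1" and "has_edge E2"
  shows "well_bicovered (join_V V1 V2) (join_E V1 E1 V2 E2) \<longleftrightarrow>
           (well_covered V1 E1 \<and> well_bicovered V1 E1 \<and>
            well_covered V2 E2 \<and> well_bicovered V2 E2 \<and>
            bnum V1 E1 = bnum V2 E2 \<and>
            bnum V2 E2 = 2 * alpha V1 E1 \<and>
            2 * alpha V1 E1 = 2 * alpha V2 E2)"
proof -
  interpret two V1 E1 V2 E2 using assms by unfold_locales
  show ?thesis by (rule main)
qed

end
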